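(* The product of $\mathbf{PM}_k$ satisfies, for any $k$-packed matrices $M_1$ and $M_2$, $\mathbf{E}_{M_1} \cdot \mathbf{E}_{M_2} = \mathbf{E}_{\mathrm{ov}(M_1, M_2)}$ and $\mathbf{H}_{M_1} \cdot \mathbf{H}_{M_2} = \mathbf{H}_{\mathrm{un}(M_1, M_2)}$.
   Context: Let $k \geq 1$, $A_k := \{0,1,\dots,k\}$. A $k$-packed matrix of size $n$ is an $n\times n$ matrix with entries in $A_k$ with at least one nonzero entry in each row and column. $\mathbf{PM}_k$ has fundamental basis $(\mathbf{F}_M)$ indexed by $k$-packed matrices and product $\mathbf{F}_{M_1}\cdot\mathbf{F}_{M_2} = \sum_{M \in \mathrm{Sh}_c(M_1,M_2)} \mathbf{F}_M$, where, for sizes $n_1, n_2$, $\mathrm{Sh}_c(M_1,M_2)$ is the set of all matrices obtained by shuffling the columns of $M_1$ with an $n_2 \times n_1$ zero block placed below it, with the columns of $M_2$ with an $n_1 \times n_2$ zero block placed above it. $\mathrm{ov}(M_1,M_2) := \begin{pmatrix} M_1 & 0 \\ 0 & M_2\end{pmatrix}$ and $\mathrm{un}(M_1,M_2) := \begin{pmatrix} 0 & M_1 \\ M_2 & 0 \end{pmatrix}$. Define $\to$ on $k$-packed matrices of size $n$: $M_1 \to M_2$ if there is $i \in [n-1]$ such that, with $s$ the number of $0$ ending the $i$th column of $M_1$ and $p$ the number of $0$ starting its $(i+1)$st column, $s + p \geq n$ and $M_2$ is obtained by exchanging columns $i$ and $i+1$ of $M_1$. $\leq_{\mathrm{M}}$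 is the reflexive and transitive closure of $\to$. The elementary and homogeneous elements are $\mathbf{E}_M := \sum_{M \leq_{\mathrm{M}} M'} \mathbf{F}_{M'}$ and $\mathbf{H}_M := \sum_{M' \leq_{\mathrm{M}} M} \mathbf{F}_{M'}$. *)

theory Defs
  imports Main
begin

text \<open>A square matrix of size n is represented as the list of its n columns,
  each column being a list of length n (entry i of column j is the (i,j) entry).\<close>

type_synonym pmat = "nat list list"

definition packed :: "nat \<Rightarrow> pmat \<Rightarrow> bool" where
  "packed k M \<longleftrightarrow>
     (\<forall>c \<in> set M. length c = length M \<and> (\<forall>x \<in> set c. x \<le> k) \<and> (\<exists>x \<in> set c. x \<noteq> 0)) \<and>
     (\<forall>i < length M. \<exists>c \<in> set M. c ! i \<noteq> 0)"

definition pad_below :: "nat \<Rightarrow> nat list \<Rightarrow> nat list" where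
  "pad_below n c = c @ replicate n 0"

definition pad_above :: "nat \<Rightarrow> nat list \<Rightarrow> nat list" where
  "pad_above n c = replicate n 0 @ c"

definition Sh_c :: "pmat \<Rightarrow> pmat \<Rightarrow> pmat set" where
  "Sh_c M1 M2 = shuffles (map (pad_below (length M2)) M1) (map (pad_above (length M1)) M2)"

definition ov :: "pmat \<Rightarrow> pmat \<Rightarrow> pmat" where
  "ov M1 M2 = map (pad_below (length M2)) M1 @ map (pad_above (length M1)) M2"

definition un :: "pmat \<Rightarrow> pmat \<Rightarrow> pmat" where
  "un M1 M2 = map (pad_above (length M1)) M2 @ map (pad_below (length M2)) M1"

text \<open>Elements of PM_k (with coefficients in a commutative ring): coefficient functions
  on matrices; F M is the fundamental basis element.\<close>
definition F :: "pmat \<Rightarrow> pmat \<Rightarrow> 'a::comm_ring_1" where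
  "F M = (\<lambda>X. if X = M then 1 else 0)"

text \<open>The product, extended bilinearly from F_{M1} * F_{M2} = sum over Sh_c(M1,M2) of F_M
  (for finitely supported elements).\<close>
definition pm_mult :: "(pmat \<Rightarrow> 'a::comm_ring_1) \<Rightarrow> (pmat \<Rightarrow> 'a) \<Rightarrow> (pmat \<Rightarrow> 'a)" where
  "pm_mult f g = (\<lambda>X. \<Sum>p \<in> {(A, B). f A \<noteq> 0 \<and> g B \<noteq> 0}.
       f (fst p) * g (snd p) * (\<Sum>M \<in> Sh_c (fst p) (snd p). F M X))"

definition trailing_zeros :: "nat list \<Rightarrow> nat" where
  "trailing_zeros c = length (takeWhile (\<lambda>x. x = 0) (rev c))"

definition leading_zeros :: "nat list \<Rightarrow> nat" where
  "leading_zeros c = length (takeWhile (\<lambda>x. x = 0) c)"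

text \<open>The elementary move M1 -> M2 on k-packed matrices (columns indexed from 0 here,
  so columns i and i+1 with i+1 < n).\<close>
definition move :: "nat \<Rightarrow> pmat \<Rightarrow> pmat \<Rightarrow> bool" where
  "move k M1 M2 \<longleftrightarrow> packed k M1 \<and>
     (\<exists>i. Suc i < length M1 \<and>
          trailing_zeros (M1 ! i) + leading_zeros (M1 ! Suc i) \<ge> length M1 \<and>
          M2 = M1[i := M1 ! Suc i, Suc i := M1 ! i])"

definition leM :: "nat \<Rightarrow> pmat \<Rightarrow> pmat \<Rightarrow> bool" where
  "leM k = (move k)\<^sup>*\<^sup>*"

definition E :: "nat \<Rightarrow> pmat \<Rightarrow> pmat \<Rightarrow> 'a::comm_ring_1" where
  "E k M = (\<lambda>X. \<Sum>M' \<in> {M'. leM k M M'}. F M' X)"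

definition H :: "nat \<Rightarrow> pmat \<Rightarrow> pmat \<Rightarrow> 'a::comm_ring_1" where
  "H k M = (\<lambda>X. \<Sum>M' \<in> {M'. leM k M' M \<and> packed k M'}. F M' X)"

end

theory Submission imports Defs "HOL-Library.Multiset" begin

lemma move_iff: "move k X Y \<longleftrightarrow> packed k X \<and> (\<exists>L a b R. X = L@a#b#R \<and> Y = L@b#a#R \<and>
   trailing_zeros a + leading_zeros b \<ge> length X)"
proof
  assume "move k X Y"
  then obtain i where p: "packed k X" and i: "Suc i < length X"
    and c: "trailing_zeros (X ! i) + leading_zeros (X ! Suc i) \<ge> length X"
    and Y: "Y = X[i := X ! Suc i, Suc i := X ! i]" unfolding move_def by blast
  have X: "X = take i X @ X!i # X!Suc i # drop (Suc (Suc i)) X"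
    using i by (simp add: Cons_nth_drop_Suc)
  have "Y = (take i X @ X!i # X!Suc i # drop (Suc (Suc i)) X)[i := X ! Suc i, Suc i := X ! i]"
    using X Y by metis
  also have "\<dots> = take i X @ X!Suc i # X!i # drop (Suc (Suc i)) X"
    using i by (simp add: list_update_append min_def)
  finally have "Y = take i X @ X!Suc i # X!i # drop (Suc (Suc i)) X" .
  with X p c show "packed k X \<and> (\<exists>L a b R. X = L@a#b#R \<and> Y = L@b#a#R \<and>
   trailing_zeros a + leading_zeros b \<ge> length X)" by blast
next
  assume "packed k X \<and> (\<exists>L a b R. X = L@a#b#R \<and> Y = L@b#a#R \<and>
   trailing_zeros a + leading_zeros b \<ge> length X)"
  then obtain L a b R where p: "packed k X" and X: "X = L@a#b#R" and Y: "Y = L@b#a#R"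
    and c: "trailing_zeros a + leading_zeros b \<ge> length X" by blast
  have 1: "X ! length L = a" "X ! Suc (length L) = b" unfolding X by (simp_all add: nth_append)
  have 2: "Y = X[length L := b, Suc (length L) := a]"
    unfolding X Y by (simp add: list_update_append)
  show "move k X Y" unfolding move_def
  proof (intro conjI[OF p] exI[of _ "length L"] conjI)
    show "Suc (length L) < length X" unfolding X by simp
    show "length X \<le> trailing_zeros (X ! length L) + leading_zeros (X ! Suc (length L))" 
      unfolding 1 by (rule c)
    show "Y = X[length L := X ! Suc (length L), Suc (length L) := X ! length L]" unfolding 1 by (rule 2)
  qed
qed

lemma takeWhile_less: "\<exists>x\<in>set c. \<not> P x \<Longrightarrow> length (takeWhile P c) < length c"
  by (induct c) auto
lemma tw_rep: "length (takeWhile (\<lambda>x. x=0) (replicate n (0::nat) @ c)) = n + length (takeWhile (\<lambda>x. x = 0) c)"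
  by (induct n) auto

lemma lz_less: "\<exists>x\<in>set c. x \<noteq> 0 \<Longrightarrow> leading_zeros c < length c"
  unfolding leading_zeros_def by (simp add: takeWhile_less)
lemma tz_less: "\<exists>x\<in>set c. x \<noteq> 0 \<Longrightarrow> trailing_zeros c < length c"
proof -
  assume "\<exists>x\<in>set c. x \<noteq> 0"
  then have "\<exists>x\<in>set (rev c). \<not> x = 0" by simp
  then have "length (takeWhile (\<lambda>x. x = 0) (rev c)) < length (rev c)" by (rule takeWhile_less)
  then show ?thesis unfolding trailing_zeros_def by simp
qed
lemma lz_pb: "leading_zeros (pad_above n c) = n + leading_zeros c"
  unfolding leading_zeros_def pad_above_def by (rule tw_rep)
lemma tz_pa: "trailing_zeros (pad_below n c) = n + trailing_zeros c"
  unfolding trailing_zeros_def pad_below_def by (simp add: tw_rep)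
lemma lz_pa: "\<exists>x\<in>set c. x \<noteq> 0 \<Longrightarrow> leading_zeros (pad_below n c) = leading_zeros c"
proof -
  assume "\<exists>x\<in>set c. x \<noteq> 0"
  then obtain x where "x \<in> set c" "\<not> x = 0" by blast
  then have "takeWhile (\<lambda>x. x = 0) (c @ replicate n 0) = takeWhile (\<lambda>x. x = 0) c"
    by (rule takeWhile_append1)
  then show ?thesis unfolding leading_zeros_def pad_below_def by simp
qed
lemma tz_pb: "\<exists>x\<in>set c. x \<noteq> 0 \<Longrightarrow> trailing_zeros (pad_above n c) = trailing_zeros c"
proof -
  assume "\<exists>x\<in>set c. x \<noteq> 0"
  then obtain x where "x \<in> set (rev c)" "\<not> x = 0" by auto
  then have "takeWhile (\<lambda>x. x = 0) (rev c @ replicate n 0) = takeWhile (\<lambda>x. x = 0) (rev c)"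
    by (rule takeWhile_append1)
  then show ?thesis unfolding trailing_zeros_def pad_above_def by simp
qed

lemma packed_mset: "mset A = mset B \<Longrightarrow> packed k A = packed k B"
proof -
  assume "mset A = mset B"
  then have "set A = set B" "length A = length B" by (auto dest: mset_eq_setD mset_eq_length)
  then show ?thesis unfolding packed_def by simp
qed

lemma move_mset: "move k A B \<Longrightarrow> mset B = mset A"
  unfolding move_iff by auto

lemma leM_mset: "leM k A B \<Longrightarrow> mset B = mset A"
  unfolding leM_def by (induct rule: rtranclp_induct) (auto dest: move_mset)

lemma leM_packed: "leM k A B \<Longrightarrow> packed k A \<Longrightarrow> packed k B"
  using packed_mset[OF leM_mset[of k A B]] by simp

lemma leM_length: "leM k A B \<Longrightarrow> length B = length A"
  using mset_eq_length[OF leM_mset[of k A B]] by simp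

lemma move_packed_src: "move k A B \<Longrightarrow> packed k A" unfolding move_def by blast

definition okc :: "nat \<Rightarrow> nat list \<Rightarrow> bool" where
  "okc n c \<longleftrightarrow> length c = n \<and> (\<exists>x\<in>set c. x \<noteq> 0)"

lemma packed_okc: "packed k A \<Longrightarrow> c \<in> set A \<Longrightarrow> okc (length A) c"
  unfolding packed_def okc_def by blast

definition isA :: "nat \<Rightarrow> nat list \<Rightarrow> bool" where
  "isA n c \<longleftrightarrow> (\<exists>x\<in>set (take n c). x \<noteq> 0)"

lemma isA_pa: "okc n c \<Longrightarrow> isA n (pad_below m c)"
  unfolding okc_def isA_def pad_below_def by simp

lemma not_isA_pb: "\<not> isA n (pad_above n c)"
  unfolding isA_def pad_above_def by simp

lemma shuffle_filter_iff:
  assumes "\<forall>x\<in>set xs. P x" "\<forall>y\<in>set ys. \<not> P y"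
  shows "zs \<in> shuffles xs ys \<longleftrightarrow> filter P zs = xs \<and> filter (\<lambda>x. \<not> P x) zs = ys"
proof
  assume z: "zs \<in> shuffles xs ys"
  have "filter P zs \<in> shuffles (filter P xs) (filter P ys)"
    using z filter_shuffles[of P xs ys] by blast
  moreover have "filter (\<lambda>x. \<not> P x) zs \<in> shuffles (filter (\<lambda>x. \<not> P x) xs) (filter (\<lambda>x. \<not> P x) ys)"
    using z filter_shuffles[of "\<lambda>x. \<not> P x" xs ys] by blast
  ultimately show "filter P zs = xs \<and> filter (\<lambda>x. \<not> P x) zs = ys"
    using assms by (simp add: filter_id_conv)
next
  assume "filter P zs = xs \<and> filter (\<lambda>x. \<not> P x) zs = ys"
  then show "zs \<in> shuffles xs ys" using partition_in_shuffles[of zs P] by simp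
qed

lemma Sh_iff:
  assumes "packed k A" "packed k B"
  shows "X \<in> Sh_c A B \<longleftrightarrow> filter (isA (length A)) X = map (pad_below (length B)) A
     \<and> filter (\<lambda>c. \<not> isA (length A) c) X = map (pad_above (length A)) B"
  unfolding Sh_c_def
  apply (rule shuffle_filter_iff)
  using assms by (auto intro: isA_pa packed_okc simp: not_isA_pb)

lemma append_in_shuffles: "xs @ ys \<in> shuffles xs ys"
  by (induct xs) (auto intro: Cons_in_shuffles_leftI)

lemma ov_in_Sh: "ov A B \<in> Sh_c A B"
  unfolding ov_def Sh_c_def by (rule append_in_shuffles)

lemma un_in_Sh: "un A B \<in> Sh_c A B"
  unfolding un_def Sh_c_def by (subst shuffles_commutes, rule append_in_shuffles)

lemma mset_ov_un: "mset (un A B) = mset (ov A B)"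
  unfolding un_def ov_def by simp

lemma packed_ov: assumes "packed k A" "packed k B" shows "packed k (ov A B)"
proof -
  have cA: "\<forall>c\<in>set A. length c = length A \<and> (\<forall>x\<in>set c. x \<le> k) \<and> (\<exists>x\<in>set c. x \<noteq> 0)"
   and rA: "\<forall>i<length A. \<exists>c\<in>set A. c ! i \<noteq> 0" using assms(1) unfolding packed_def by auto
  have cB: "\<forall>c\<in>set B. length c = length B \<and> (\<forall>x\<in>set c. x \<le> k) \<and> (\<exists>x\<in>set c. x \<noteq> 0)"
   and rB: "\<forall>i<length B. \<exists>c\<in>set B. c ! i \<noteq> 0" using assms(2) unfolding packed_def by auto
  have 1: "\<forall>c\<in>set (ov A B). length c = length (ov A B) \<and> (\<forall>x\<in>set c. x \<le> k) \<and> (\<exists>x\<in>set c. x \<noteq> 0)"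
  proof
    fix c assume "c \<in> set (ov A B)"
    then consider (a) c0 where "c0 \<in> set A" "c = pad_below (length B) c0"
      | (b) c0 where "c0 \<in> set B" "c = pad_above (length A) c0" unfolding ov_def by auto
    then show "length c = length (ov A B) \<and> (\<forall>x\<in>set c. x \<le> k) \<and> (\<exists>x\<in>set c. x \<noteq> 0)"
    proof cases
      case a
      then obtain x where "x \<in> set c0" "x \<noteq> 0" using cA by blast
      then show ?thesis using a cA unfolding ov_def pad_below_def by auto
    next
      case b
      then obtain x where "x \<in> set c0" "x \<noteq> 0" using cB by blast
      then show ?thesis using b cB unfolding ov_def pad_above_def by auto
    qed
  qed
  have 2: "\<forall>i<length (ov A B). \<exists>c\<in>set (ov A B). c ! i \<noteq> 0"
  proof (intro allI impI)
    fix i assume i: "i < length (ov A B)"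
    show "\<exists>c\<in>set (ov A B). c ! i \<noteq> 0"
    proof (cases "i < length A")
      case True
      then obtain c where c: "c \<in> set A" "c ! i \<noteq> 0" using rA by blast
      then have "pad_below (length B) c ! i \<noteq> 0" using cA True unfolding pad_below_def
        by (simp add: nth_append)
      then show ?thesis using c unfolding ov_def by auto
    next
      case False
      then have "i - length A < length B" using i unfolding ov_def by simp
      then obtain c where c: "c \<in> set B" "c ! (i - length A) \<noteq> 0" using rB by blast
      then have "pad_above (length A) c ! i \<noteq> 0" using False unfolding pad_above_def
        by (simp add: nth_append)
      then show ?thesis using c unfolding ov_def by auto
    qed
  qed
  show ?thesis using 1 2 unfolding packed_def by blast
qed

lemma packed_un: "packed k A \<Longrightarrow> packed k B \<Longrightarrow> packed k (un A B)"
  using packed_ov[of k A B] packed_mset[OF mset_ov_un[of A B]] by simp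


lemma swap_core:
  assumes fA: "filter (isA n1) (L@a#b#R) = map (pad_below n2) A"
    and fB: "filter (\<lambda>c. \<not> isA n1 c) (L@a#b#R) = map (pad_above n1) B"
  shows "(isA n1 a \<and> isA n1 b \<and> (\<exists>A1 a0 b0 A2. A = A1@a0#b0#A2 \<and> a = pad_below n2 a0 \<and> b = pad_below n2 b0
            \<and> filter (isA n1) (L@b#a#R) = map (pad_below n2) (A1@b0#a0#A2)
            \<and> filter (\<lambda>c. \<not> isA n1 c) (L@b#a#R) = map (pad_above n1) B))
   \<or> (\<not> isA n1 a \<and> \<not> isA n1 b \<and> (\<exists>B1 a0 b0 B2. B = B1@a0#b0#B2 \<and> a = pad_above n1 a0 \<and> b = pad_above n1 b0
            \<and> filter (isA n1) (L@b#a#R) = map (pad_below n2) A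
            \<and> filter (\<lambda>c. \<not> isA n1 c) (L@b#a#R) = map (pad_above n1) (B1@b0#a0#B2)))
   \<or> (isA n1 a \<noteq> isA n1 b \<and> filter (isA n1) (L@b#a#R) = map (pad_below n2) A
            \<and> filter (\<lambda>c. \<not> isA n1 c) (L@b#a#R) = map (pad_above n1) B)"
proof (cases "isA n1 a"; cases "isA n1 b")
  assume a: "isA n1 a" and b: "isA n1 b"
  have "map (pad_below n2) A = filter (isA n1) L @ a # b # filter (isA n1) R" using fA a b by simp
  then obtain A1 V where A: "A = A1 @ V" "filter (isA n1) L = map (pad_below n2) A1"
    "a # b # filter (isA n1) R = map (pad_below n2) V" by (auto simp: map_eq_append_conv)
  then obtain a0 b0 A2 where V: "V = a0#b0#A2" "a = pad_below n2 a0" "b = pad_below n2 b0"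
     "filter (isA n1) R = map (pad_below n2) A2" by (auto simp: Cons_eq_map_conv)
  have "filter (\<lambda>c. \<not> isA n1 c) (L@b#a#R) = map (pad_above n1) B" using fB a b by simp
  moreover have "filter (isA n1) (L@b#a#R) = map (pad_below n2) (A1@b0#a0#A2)"
    using A V a b by simp
  ultimately show ?thesis using A V a b by blast
next
  assume a: "\<not> isA n1 a" and b: "\<not> isA n1 b"
  have "map (pad_above n1) B = filter (\<lambda>c. \<not> isA n1 c) L @ a # b # filter (\<lambda>c. \<not> isA n1 c) R" using fB a b by simp
  then obtain B1 V where B: "B = B1 @ V" "filter (\<lambda>c. \<not> isA n1 c) L = map (pad_above n1) B1"
    "a # b # filter (\<lambda>c. \<not> isA n1 c) R = map (pad_above n1) V" by (auto simp: map_eq_append_conv)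
  then obtain a0 b0 B2 where V: "V = a0#b0#B2" "a = pad_above n1 a0" "b = pad_above n1 b0"
     "filter (\<lambda>c. \<not> isA n1 c) R = map (pad_above n1) B2" by (auto simp: Cons_eq_map_conv)
  have "filter (isA n1) (L@b#a#R) = map (pad_below n2) A" using fA a b by simp
  moreover have "filter (\<lambda>c. \<not> isA n1 c) (L@b#a#R) = map (pad_above n1) (B1@b0#a0#B2)"
    using B V a b by simp
  ultimately show ?thesis using B V a b by blast
next
  assume a: "isA n1 a" and b: "\<not> isA n1 b"
  then show ?thesis using fA fB by simp
next
  assume a: "\<not> isA n1 a" and b: "isA n1 b"
  then show ?thesis using fA fB by simp
qed

lemma typeA: "x \<in> set Z \<Longrightarrow> isA n1 x \<Longrightarrow> filter (isA n1) Z = map (pad_below n2) A \<Longrightarrow>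
   \<exists>x0\<in>set A. x = pad_below n2 x0"
proof -
  assume 1: "x \<in> set Z" "isA n1 x" and eq: "filter (isA n1) Z = map (pad_below n2) A"
  have "x \<in> set (filter (isA n1) Z)" using 1 by (simp only: set_filter, blast)
  then have "x \<in> set (map (pad_below n2) A)" by (simp only: eq)
  then show ?thesis by auto
qed

lemma typeB: "x \<in> set Z \<Longrightarrow> \<not> isA n1 x \<Longrightarrow> filter (\<lambda>c. \<not> isA n1 c) Z = map (pad_above n1) B \<Longrightarrow>
   \<exists>x0\<in>set B. x = pad_above n1 x0"
proof -
  assume 1: "x \<in> set Z" "\<not> isA n1 x" and eq: "filter (\<lambda>c. \<not> isA n1 c) Z = map (pad_above n1) B"
  have "x \<in> set (filter (\<lambda>c. \<not> isA n1 c) Z)" using 1 by (simp only: set_filter, blast)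
  then have "x \<in> set (map (pad_above n1) B)" by (simp only: eq)
  then show ?thesis by auto
qed

lemma okc_nz: "okc n c \<Longrightarrow> \<exists>x\<in>set c. x \<noteq> 0" unfolding okc_def by blast
lemma okc_len: "okc n c \<Longrightarrow> length c = n" unfolding okc_def by blast

lemma len_filters: "filter P X = map f A \<Longrightarrow> filter (\<lambda>c. \<not> P c) X = map g B \<Longrightarrow> length X = length A + length B"
  using sum_length_filter_compl[of P X] by simp

lemma bad_pair:
  assumes "filter (isA n1) X = map (pad_below n2) A"
    and "filter (\<lambda>c. \<not> isA n1 c) X = map (pad_above n1) B"
    and "packed k A" "length A = n1" "packed k B" "length B = n2"
    and "a \<in> set X" "b \<in> set X" "\<not> isA n1 a" "isA n1 b"
  shows "trailing_zeros a + leading_zeros b < n1 + n2"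
proof -
  obtain a0 where a0: "a0 \<in> set B" "a = pad_above n1 a0" using typeB assms by blast
  obtain b0 where b0: "b0 \<in> set A" "b = pad_below n2 b0" using typeA assms by blast
  have oa: "okc n2 a0" using packed_okc[OF assms(5) a0(1)] assms(6) by simp
  have ob: "okc n1 b0" using packed_okc[OF assms(3) b0(1)] assms(4) by simp
  have "trailing_zeros a = trailing_zeros a0" using a0 tz_pb okc_nz[OF oa] by simp
  also have "\<dots> < n2" using tz_less[OF okc_nz[OF oa]] okc_len[OF oa] by simp
  finally have 1: "trailing_zeros a < n2" .
  have "leading_zeros b = leading_zeros b0" using b0 lz_pa okc_nz[OF ob] by simp
  also have "\<dots> < n1" using lz_less[OF okc_nz[OF ob]] okc_len[OF ob] by simp
  finally show ?thesis using 1 by simp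
qed

lemma E_step:
  assumes mv: "move k X Y" and fA: "filter (isA n1) X = map (pad_below n2) A"
    and fB: "filter (\<lambda>c. \<not> isA n1 c) X = map (pad_above n1) B"
    and pA: "packed k A" "length A = n1" and pB: "packed k B" "length B = n2"
  shows "\<exists>A' B'. (A' = A \<or> move k A A') \<and> (B' = B \<or> move k B B') \<and>
      filter (isA n1) Y = map (pad_below n2) A' \<and> filter (\<lambda>c. \<not> isA n1 c) Y = map (pad_above n1) B'"
proof -
  from mv obtain L a b R where X: "X = L@a#b#R" and Y: "Y = L@b#a#R"
    and c: "trailing_zeros a + leading_zeros b \<ge> length X" by (auto simp: move_iff)
  have lenX: "length X = n1 + n2" using len_filters[OF fA fB] pA pB by simp
  from swap_core[OF fA[unfolded X] fB[unfolded X]]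
  consider (AA) A1 a0 b0 A2 where "A = A1@a0#b0#A2" "a = pad_below n2 a0" "b = pad_below n2 b0"
            "filter (isA n1) Y = map (pad_below n2) (A1@b0#a0#A2)"
            "filter (\<lambda>c. \<not> isA n1 c) Y = map (pad_above n1) B"
    | (BB) B1 a0 b0 B2 where "B = B1@a0#b0#B2" "a = pad_above n1 a0" "b = pad_above n1 b0"
            "filter (isA n1) Y = map (pad_below n2) A"
            "filter (\<lambda>c. \<not> isA n1 c) Y = map (pad_above n1) (B1@b0#a0#B2)"
    | (AB) "isA n1 a \<noteq> isA n1 b" "filter (isA n1) Y = map (pad_below n2) A"
            "filter (\<lambda>c. \<not> isA n1 c) Y = map (pad_above n1) B"
    unfolding Y by blast
  then show ?thesis
  proof cases
    case AA
    have ob: "okc n1 b0" using packed_okc[OF pA(1)] pA(2) AA(1) by simp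
    have "trailing_zeros a + leading_zeros b = n2 + trailing_zeros a0 + leading_zeros b0"
      using AA tz_pa lz_pa[OF okc_nz[OF ob]] by simp
    then have "trailing_zeros a0 + leading_zeros b0 \<ge> length A" using c lenX pA(2) by simp
    then have "move k A (A1@b0#a0#A2)" using pA(1) AA(1) unfolding move_iff by blast
    then show ?thesis using AA by blast
  next
    case BB
    have oa: "okc n2 a0" using packed_okc[OF pB(1)] pB(2) BB(1) by simp
    have "trailing_zeros a + leading_zeros b = n1 + trailing_zeros a0 + leading_zeros b0"
      using BB lz_pb tz_pb[OF okc_nz[OF oa]] by simp
    then have "trailing_zeros a0 + leading_zeros b0 \<ge> length B" using c lenX pB(2) by simp
    then have "move k B (B1@b0#a0#B2)" using pB(1) BB(1) unfolding move_iff by blast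
    then show ?thesis using BB by blast
  next
    case AB
    have "\<not> (\<not> isA n1 a \<and> isA n1 b)"
    proof
      assume "\<not> isA n1 a \<and> isA n1 b"
      then have "trailing_zeros a + leading_zeros b < n1 + n2"
        using bad_pair[OF fA fB pA pB] X by simp
      then show False using c lenX by simp
    qed
    then show ?thesis using AB by blast
  qed
qed

lemma H_step:
  assumes mv: "move k X Y" and fA: "filter (isA n1) Y = map (pad_below n2) A"
    and fB: "filter (\<lambda>c. \<not> isA n1 c) Y = map (pad_above n1) B"
    and pA: "packed k A" "length A = n1" and pB: "packed k B" "length B = n2"
  shows "\<exists>A' B'. (A' = A \<or> move k A' A) \<and> (B' = B \<or> move k B' B) \<and>
      filter (isA n1) X = map (pad_below n2) A' \<and> filter (\<lambda>c. \<not> isA n1 c) X = map (pad_above n1) B'"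
proof -
  from mv obtain L a b R where X: "X = L@a#b#R" and Y: "Y = L@b#a#R"
    and c: "trailing_zeros a + leading_zeros b \<ge> length X" by (auto simp: move_iff)
  have lenX: "length X = n1 + n2" using len_filters[OF fA fB] pA pB X Y by simp
  from swap_core[OF fA[unfolded Y] fB[unfolded Y]]
  consider (AA) A1 a0 b0 A2 where "A = A1@b0#a0#A2" "a = pad_below n2 a0" "b = pad_below n2 b0"
            "filter (isA n1) X = map (pad_below n2) (A1@a0#b0#A2)"
            "filter (\<lambda>c. \<not> isA n1 c) X = map (pad_above n1) B"
    | (BB) B1 a0 b0 B2 where "B = B1@b0#a0#B2" "a = pad_above n1 a0" "b = pad_above n1 b0"
            "filter (isA n1) X = map (pad_below n2) A"
            "filter (\<lambda>c. \<not> isA n1 c) X = map (pad_above n1) (B1@a0#b0#B2)"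
    | (AB) "isA n1 a \<noteq> isA n1 b" "filter (isA n1) X = map (pad_below n2) A"
            "filter (\<lambda>c. \<not> isA n1 c) X = map (pad_above n1) B"
    unfolding X by blast
  then show ?thesis
  proof cases
    case AA
    have ob: "okc n1 b0" using packed_okc[OF pA(1)] pA(2) AA(1) by simp
    have "trailing_zeros a + leading_zeros b = n2 + trailing_zeros a0 + leading_zeros b0"
      using AA tz_pa lz_pa[OF okc_nz[OF ob]] by simp
    then have le: "trailing_zeros a0 + leading_zeros b0 \<ge> length (A1@a0#b0#A2)" using c lenX pA(2) AA(1) by simp
    have "packed k (A1@a0#b0#A2)" using pA(1) packed_mset[of "A1@a0#b0#A2" A k] AA(1) by simp
    then have "move k (A1@a0#b0#A2) A" using le AA(1) unfolding move_iff by blast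
    then show ?thesis using AA by blast
  next
    case BB
    have oa: "okc n2 a0" using packed_okc[OF pB(1)] pB(2) BB(1) by simp
    have "trailing_zeros a + leading_zeros b = n1 + trailing_zeros a0 + leading_zeros b0"
      using BB lz_pb tz_pb[OF okc_nz[OF oa]] by simp
    then have le: "trailing_zeros a0 + leading_zeros b0 \<ge> length (B1@a0#b0#B2)" using c lenX pB(2) BB(1) by simp
    have "packed k (B1@a0#b0#B2)" using pB(1) packed_mset[of "B1@a0#b0#B2" B k] BB(1) by simp
    then have "move k (B1@a0#b0#B2) B" using le BB(1) unfolding move_iff by blast
    then show ?thesis using BB by blast
  next
    case AB
    have "\<not> (\<not> isA n1 a \<and> isA n1 b)"
    proof
      assume "\<not> isA n1 a \<and> isA n1 b"
      then have "trailing_zeros a + leading_zeros b < n1 + n2"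
        using bad_pair[OF AB(2,3) pA pB] X by simp
      then show False using c lenX by simp
    qed
    then show ?thesis using AB by blast
  qed
qed


lemma move_leM: "move k A B \<Longrightarrow> leM k A B" unfolding leM_def by blast
lemma leM_refl: "leM k A A" unfolding leM_def by blast
lemma leM_trans: "leM k A B \<Longrightarrow> leM k B C \<Longrightarrow> leM k A C" unfolding leM_def by (rule rtranclp_trans)

lemma bubble_left:
  "packed k (L@xs@y#R) \<Longrightarrow> \<forall>x\<in>set xs. trailing_zeros x + leading_zeros y \<ge> length (L@xs@y#R)
   \<Longrightarrow> leM k (L@xs@y#R) (L@y#xs@R)"
proof (induct xs arbitrary: L)
  case Nil
  then show ?case by (simp add: leM_refl)
next
  case (Cons x xs)
  have 1: "leM k (L@x#xs@y#R) (L@x#y#xs@R)"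
    using Cons.hyps[of "L@[x]"] Cons.prems by simp
  have p: "packed k (L@x#y#xs@R)" using Cons.prems(1) packed_mset[of "L@x#y#xs@R" "L@(x#xs)@y#R" k] by simp
  have "move k (L@x#y#xs@R) (L@y#x#xs@R)" unfolding move_iff
    using p Cons.prems(2) by fastforce
  then show ?case using 1 leM_trans move_leM by fastforce
qed

lemma bubble_right:
  "packed k (L@y#xs@R) \<Longrightarrow> \<forall>x\<in>set xs. trailing_zeros y + leading_zeros x \<ge> length (L@y#xs@R)
   \<Longrightarrow> leM k (L@y#xs@R) (L@xs@y#R)"
proof (induct xs arbitrary: L)
  case Nil
  then show ?case by (simp add: leM_refl)
next
  case (Cons x xs)
  have p: "packed k (L@x#y#xs@R)" using Cons.prems(1) packed_mset[of "L@x#y#xs@R" "L@y#(x#xs)@R" k] by simp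
  have 1: "leM k (L@x#y#xs@R) (L@x#xs@y#R)"
    using Cons.hyps[of "L@[x]"] Cons.prems p by simp
  have "move k (L@y#x#xs@R) (L@x#y#xs@R)" unfolding move_iff
    using Cons.prems by fastforce
  then show ?case using 1 leM_trans move_leM by fastforce
qed

lemma shuffle_fwd:
  "zs \<in> shuffles xs ys \<Longrightarrow> packed k (L@xs@ys) \<Longrightarrow>
   \<forall>x\<in>set xs. \<forall>y\<in>set ys. trailing_zeros x + leading_zeros y \<ge> length (L@xs@ys) \<Longrightarrow>
   leM k (L@xs@ys) (L@zs)"
proof (induct xs ys arbitrary: L zs rule: shuffles.induct)
  case (1 ys)
  then show ?case by (simp add: leM_refl)
next
  case (2 xs)
  then show ?case by (simp add: leM_refl)
next
  case (3 x xs y ys)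
  from "3.prems"(1) consider (a) zs' where "zs = x#zs'" "zs' \<in> shuffles xs (y#ys)"
    | (b) zs' where "zs = y#zs'" "zs' \<in> shuffles (x#xs) ys" by auto
  then show ?case
  proof cases
    case a
    have "leM k ((L@[x])@xs@(y#ys)) ((L@[x])@zs')"
      apply (rule "3.hyps"(1)[OF a(2)])
      using "3.prems" by auto
    then show ?thesis using a by simp
  next
    case b
    have 1: "leM k (L@(x#xs)@y#ys) (L@y#(x#xs)@ys)"
      apply (rule bubble_left)
      using "3.prems" by auto
    have p: "packed k ((L@[y])@(x#xs)@ys)"
      using "3.prems"(2) packed_mset[of "(L@[y])@(x#xs)@ys" "L@(x#xs)@y#ys" k] by simp
    have "leM k ((L@[y])@(x#xs)@ys) ((L@[y])@zs')"
      apply (rule "3.hyps"(2)[OF b(2) p])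
      using "3.prems" by auto
    then show ?thesis using 1 b leM_trans by fastforce
  qed
qed

lemma shuffle_rev:
  "zs \<in> shuffles xs ys \<Longrightarrow> packed k (L@xs@ys) \<Longrightarrow>
   \<forall>x\<in>set xs. \<forall>y\<in>set ys. trailing_zeros x + leading_zeros y \<ge> length (L@xs@ys) \<Longrightarrow>
   leM k (L@zs) (L@ys@xs)"
proof (induct xs ys arbitrary: L zs rule: shuffles.induct)
  case (1 ys)
  then show ?case by (simp add: leM_refl)
next
  case (2 xs)
  then show ?case by (simp add: leM_refl)
next
  case (3 x xs y ys)
  from "3.prems"(1) consider (a) zs' where "zs = x#zs'" "zs' \<in> shuffles xs (y#ys)"
    | (b) zs' where "zs = y#zs'" "zs' \<in> shuffles (x#xs) ys" by auto
  then show ?case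
  proof cases
    case a
    have 1: "leM k ((L@[x])@zs') ((L@[x])@(y#ys)@xs)"
      apply (rule "3.hyps"(1)[OF a(2)])
      using "3.prems" by auto
    have p: "packed k (L@x#(y#ys)@xs)"
      using "3.prems"(2) packed_mset[of "L@x#(y#ys)@xs" "L@(x#xs)@y#ys" k] by simp
    have 2: "leM k (L@x#(y#ys)@xs) (L@(y#ys)@x#xs)"
      apply (rule bubble_right[OF p])
      using "3.prems" by auto
    show ?thesis using 1 2 a leM_trans by fastforce
  next
    case b
    have p: "packed k ((L@[y])@(x#xs)@ys)"
      using "3.prems"(2) packed_mset[of "(L@[y])@(x#xs)@ys" "L@(x#xs)@y#ys" k] by simp
    have "leM k ((L@[y])@zs') ((L@[y])@ys@(x#xs))"
      apply (rule "3.hyps"(2)[OF b(2) p])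
      using "3.prems" by auto
    then show ?thesis using b by simp
  qed
qed


lemma lift_ov1: assumes "move k A A'" "packed k B" shows "move k (ov A B) (ov A' B)"
proof -
  from assms(1) obtain L a b R where p: "packed k A" and A: "A = L@a#b#R" and A': "A' = L@b#a#R"
    and c: "trailing_zeros a + leading_zeros b \<ge> length A" by (auto simp: move_iff)
  have ob: "okc (length A) b" using packed_okc[OF p] A by simp
  have len: "length A' = length A" using A A' by simp
  let ?pa = "pad_below (length B)" and ?pb = "pad_above (length A)"
  have e1: "ov A B = map ?pa L @ ?pa a # ?pa b # (map ?pa R @ map ?pb B)" unfolding ov_def A by simp
  have e2: "ov A' B = map ?pa L @ ?pa b # ?pa a # (map ?pa R @ map ?pb B)" unfolding ov_def len[symmetric]
    unfolding A' by simp
  have "trailing_zeros (?pa a) + leading_zeros (?pa b) \<ge> length (ov A B)"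
    using c tz_pa lz_pa[OF okc_nz[OF ob]] unfolding ov_def by simp
  then show ?thesis unfolding move_iff using packed_ov[OF p assms(2)] e1 e2 by blast
qed

lemma lift_ov2: assumes "move k B B'" "packed k A" shows "move k (ov A B) (ov A B')"
proof -
  from assms(1) obtain L a b R where p: "packed k B" and B: "B = L@a#b#R" and B': "B' = L@b#a#R"
    and c: "trailing_zeros a + leading_zeros b \<ge> length B" by (auto simp: move_iff)
  have oa: "okc (length B) a" using packed_okc[OF p] B by simp
  have len: "length B' = length B" using B B' by simp
  let ?pa = "pad_below (length B)" and ?pb = "pad_above (length A)"
  have mB: "map ?pb B = map ?pb L @ ?pb a # ?pb b # map ?pb R" using B by simp
  have e1: "ov A B = (map ?pa A @ map ?pb L) @ ?pb a # ?pb b # map ?pb R" unfolding ov_def mB by simp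
  have e2: "ov A B' = (map ?pa A @ map ?pb L) @ ?pb b # ?pb a # map ?pb R" unfolding ov_def len
    unfolding B' by simp
  have "trailing_zeros (?pb a) + leading_zeros (?pb b) \<ge> length (ov A B)"
    using c lz_pb tz_pb[OF okc_nz[OF oa]] unfolding ov_def by simp
  then show ?thesis unfolding move_iff using packed_ov[OF assms(2) p] e1 e2 by blast
qed

lemma lift_un1: assumes "move k A A'" "packed k B" shows "move k (un A B) (un A' B)"
proof -
  from assms(1) obtain L a b R where p: "packed k A" and A: "A = L@a#b#R" and A': "A' = L@b#a#R"
    and c: "trailing_zeros a + leading_zeros b \<ge> length A" by (auto simp: move_iff)
  have ob: "okc (length A) b" using packed_okc[OF p] A by simp
  have len: "length A' = length A" using A A' by simp
  let ?pa = "pad_below (length B)" and ?pb = "pad_above (length A)"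
  have mA: "map ?pa A = map ?pa L @ ?pa a # ?pa b # map ?pa R" using A by simp
  have e1: "un A B = (map ?pb B @ map ?pa L) @ ?pa a # ?pa b # map ?pa R" unfolding un_def mA by simp
  have e2: "un A' B = (map ?pb B @ map ?pa L) @ ?pa b # ?pa a # map ?pa R" unfolding un_def len
    unfolding A' by simp
  have "trailing_zeros (?pa a) + leading_zeros (?pa b) \<ge> length (un A B)"
    using c tz_pa lz_pa[OF okc_nz[OF ob]] unfolding un_def by simp
  then show ?thesis unfolding move_iff using packed_un[OF p assms(2)] e1 e2 by blast
qed

lemma lift_un2: assumes "move k B B'" "packed k A" shows "move k (un A B) (un A B')"
proof -
  from assms(1) obtain L a b R where p: "packed k B" and B: "B = L@a#b#R" and B': "B' = L@b#a#R"
    and c: "trailing_zeros a + leading_zeros b \<ge> length B" by (auto simp: move_iff)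
  have oa: "okc (length B) a" using packed_okc[OF p] B by simp
  have len: "length B' = length B" using B B' by simp
  let ?pa = "pad_below (length B)" and ?pb = "pad_above (length A)"
  have mB: "map ?pb B = map ?pb L @ ?pb a # ?pb b # map ?pb R" using B by simp
  have e1: "un A B = map ?pb L @ ?pb a # ?pb b # (map ?pb R @ map ?pa A)" unfolding un_def mB by simp
  have e2: "un A B' = map ?pb L @ ?pb b # ?pb a # (map ?pb R @ map ?pa A)" unfolding un_def len
    unfolding B' by simp
  have "trailing_zeros (?pb a) + leading_zeros (?pb b) \<ge> length (un A B)"
    using c lz_pb tz_pb[OF okc_nz[OF oa]] unfolding un_def by simp
  then show ?thesis unfolding move_iff using packed_un[OF assms(2) p] e1 e2 by blast
qed

lemma leM_ov1: "leM k M1 A \<Longrightarrow> packed k M2 \<Longrightarrow> leM k (ov M1 M2) (ov A M2)"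
  unfolding leM_def by (induct rule: rtranclp_induct) (auto intro: rtranclp.rtrancl_into_rtrancl lift_ov1)
lemma leM_ov2: "leM k M2 B \<Longrightarrow> packed k A \<Longrightarrow> leM k (ov A M2) (ov A B)"
  unfolding leM_def by (induct rule: rtranclp_induct) (auto intro: rtranclp.rtrancl_into_rtrancl lift_ov2)
lemma leM_un1: "leM k A M1 \<Longrightarrow> packed k B \<Longrightarrow> leM k (un A B) (un M1 B)"
  unfolding leM_def by (induct rule: rtranclp_induct) (auto intro: rtranclp.rtrancl_into_rtrancl lift_un1)
lemma leM_un2: "leM k B M2 \<Longrightarrow> packed k A \<Longrightarrow> leM k (un A B) (un A M2)"
  unfolding leM_def by (induct rule: rtranclp_induct) (auto intro: rtranclp.rtrancl_into_rtrancl lift_un2)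

lemma cond_AB: "x \<in> set (map (pad_below (length B)) A) \<Longrightarrow> y \<in> set (map (pad_above (length A)) B) \<Longrightarrow>
  trailing_zeros x + leading_zeros y \<ge> length (ov A B)"
  unfolding ov_def using tz_pa lz_pb by auto

lemma E_char:
  assumes p1: "packed k M1" and p2: "packed k M2"
  shows "leM k (ov M1 M2) X \<longleftrightarrow> (\<exists>A B. leM k M1 A \<and> leM k M2 B \<and> X \<in> Sh_c A B)"
proof
  assume "leM k (ov M1 M2) X"
  then have "\<exists>A B. leM k M1 A \<and> leM k M2 B \<and> filter (isA (length M1)) X = map (pad_below (length M2)) A
     \<and> filter (\<lambda>c. \<not> isA (length M1) c) X = map (pad_above (length M1)) B"
    unfolding leM_def
  proof (induct rule: rtranclp_induct)
    case base
    show ?case using Sh_iff[OF p1 p2, THEN iffD1, OF ov_in_Sh] by (auto simp: leM_def)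
  next
    case (step Y Z)
    then obtain A B where AB: "leM k M1 A" "leM k M2 B" "filter (isA (length M1)) Y = map (pad_below (length M2)) A"
     "filter (\<lambda>c. \<not> isA (length M1) c) Y = map (pad_above (length M1)) B" by (auto simp: leM_def)
    have pA: "packed k A" "length A = length M1" using AB leM_packed p1 leM_length by auto
    have pB: "packed k B" "length B = length M2" using AB leM_packed p2 leM_length by auto
    from E_step[OF step(2) AB(3,4) pA pB] obtain A' B' where
      "A' = A \<or> move k A A'" "B' = B \<or> move k B B'" "filter (isA (length M1)) Z = map (pad_below (length M2)) A'"
      "filter (\<lambda>c. \<not> isA (length M1) c) Z = map (pad_above (length M1)) B'" by blast
    then show ?case using AB(1,2) unfolding leM_def
      by (metis rtranclp.rtrancl_into_rtrancl)
  qed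
  then obtain A B where AB: "leM k M1 A" "leM k M2 B" "filter (isA (length M1)) X = map (pad_below (length M2)) A"
     "filter (\<lambda>c. \<not> isA (length M1) c) X = map (pad_above (length M1)) B" by blast
  have pA: "packed k A" "length A = length M1" using AB leM_packed p1 leM_length by auto
  have pB: "packed k B" "length B = length M2" using AB leM_packed p2 leM_length by auto
  have "X \<in> Sh_c A B" using Sh_iff[OF pA(1) pB(1)] AB pA pB by simp
  then show "\<exists>A B. leM k M1 A \<and> leM k M2 B \<and> X \<in> Sh_c A B" using AB by blast
next
  assume "\<exists>A B. leM k M1 A \<and> leM k M2 B \<and> X \<in> Sh_c A B"
  then obtain A B where AB: "leM k M1 A" "leM k M2 B" "X \<in> Sh_c A B" by blast
  have pA: "packed k A" using AB leM_packed p1 by auto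
  have pB: "packed k B" using AB leM_packed p2 by auto
  have "leM k ([] @ ov A B) ([] @ X)"
    unfolding ov_def
    apply (rule shuffle_fwd)
    using AB(3) packed_ov[OF pA pB] cond_AB[of _ B A] unfolding Sh_c_def ov_def by auto
  then have 3: "leM k (ov A B) X" by simp
  have "leM k (ov M1 M2) (ov A M2)" using leM_ov1[OF AB(1) p2] .
  moreover have "leM k (ov A M2) (ov A B)" using leM_ov2[OF AB(2) pA] .
  ultimately show "leM k (ov M1 M2) X" using 3 leM_trans by blast
qed

lemma H_char:
  assumes p1: "packed k M1" and p2: "packed k M2"
  shows "(leM k X (un M1 M2) \<and> packed k X) \<longleftrightarrow>
     (\<exists>A B. (leM k A M1 \<and> packed k A) \<and> (leM k B M2 \<and> packed k B) \<and> X \<in> Sh_c A B)"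
proof
  assume "leM k X (un M1 M2) \<and> packed k X"
  then have "leM k X (un M1 M2)" "packed k X" by auto
  then have "\<exists>A B. leM k A M1 \<and> packed k A \<and> leM k B M2 \<and> packed k B \<and> filter (isA (length M1)) X = map (pad_below (length M2)) A
     \<and> filter (\<lambda>c. \<not> isA (length M1) c) X = map (pad_above (length M1)) B"
    unfolding leM_def
  proof (induct rule: converse_rtranclp_induct)
    case base
    show ?case using Sh_iff[OF p1 p2, THEN iffD1, OF un_in_Sh] p1 p2 by (auto simp: leM_def)
  next
    case (step Y Z)
    have pZ: "packed k Z" using step(1) step(4) packed_mset move_mset by metis
    then obtain A B where AB: "leM k A M1" "packed k A" "leM k B M2" "packed k B"
     "filter (isA (length M1)) Z = map (pad_below (length M2)) A"
     "filter (\<lambda>c. \<not> isA (length M1) c) Z = map (pad_above (length M1)) B" using step(3) by (auto simp: leM_def)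
    have lA: "length A = length M1" using AB leM_length by metis
    have lB: "length B = length M2" using AB leM_length by metis
    from H_step[OF step(1) AB(5,6) AB(2) lA AB(4) lB] obtain A' B' where
      "A' = A \<or> move k A' A" "B' = B \<or> move k B' B" "filter (isA (length M1)) Y = map (pad_below (length M2)) A'"
      "filter (\<lambda>c. \<not> isA (length M1) c) Y = map (pad_above (length M1)) B'" by blast
    then show ?case using AB unfolding leM_def
      by (metis converse_rtranclp_into_rtranclp move_packed_src)
  qed
  then obtain A B where AB: "leM k A M1" "packed k A" "leM k B M2" "packed k B"
     "filter (isA (length M1)) X = map (pad_below (length M2)) A"
     "filter (\<lambda>c. \<not> isA (length M1) c) X = map (pad_above (length M1)) B" by blast
  have lA: "length A = length M1" using AB leM_length by metis
  have lB: "length B = length M2" using AB leM_length by metis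
  have "X \<in> Sh_c A B" using Sh_iff[OF AB(2) AB(4)] AB lA lB by simp
  then show "\<exists>A B. (leM k A M1 \<and> packed k A) \<and> (leM k B M2 \<and> packed k B) \<and> X \<in> Sh_c A B" using AB by blast
next
  assume "\<exists>A B. (leM k A M1 \<and> packed k A) \<and> (leM k B M2 \<and> packed k B) \<and> X \<in> Sh_c A B"
  then obtain A B where AB: "leM k A M1" "packed k A" "leM k B M2" "packed k B" "X \<in> Sh_c A B" by blast
  have "mset X = mset (ov A B)" using mset_shuffles[of X] AB(5) unfolding Sh_c_def ov_def by simp
  then have pX: "packed k X" using packed_mset packed_ov[OF AB(2,4)] by metis
  have "leM k ([] @ X) ([] @ un A B)"
    unfolding un_def
    apply (rule shuffle_rev)
    using AB(5) packed_ov[OF AB(2,4)] cond_AB[of _ B A] unfolding Sh_c_def ov_def by auto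
  then have 3: "leM k X (un A B)" by simp
  have "leM k (un A B) (un M1 B)" using leM_un1[OF AB(1,4)] .
  moreover have "leM k (un M1 B) (un M1 M2)" using leM_un2[OF AB(3) p1] .
  ultimately show "leM k X (un M1 M2) \<and> packed k X" using 3 pX leM_trans by blast
qed


lemma sum_F: "finite S \<Longrightarrow> (\<Sum>M'\<in>S. F M' X) = (if X \<in> S then 1 else (0::'a::comm_ring_1))"
  unfolding F_def by simp

lemma fin_perm: "finite {M'. mset M' = mset (M::pmat)}"
proof (rule finite_subset)
  show "{M'. mset M' = mset M} \<subseteq> {xs. set xs \<subseteq> set M \<and> length xs = length M}"
    by (auto dest: mset_eq_setD mset_eq_length)
  show "finite {xs. set xs \<subseteq> set M \<and> length xs = length M}"
    by (rule finite_lists_length_eq) simp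
qed

lemma fin_E: "finite {M'. leM k M M'}"
  by (rule finite_subset[OF _ fin_perm[of M]]) (auto dest: leM_mset)

lemma fin_H: "finite {M'. leM k M' M \<and> packed k M'}"
  by (rule finite_subset[OF _ fin_perm[of M]]) (auto dest: leM_mset)

lemma E_eq: "E k M = (\<lambda>X. if X \<in> {M'. leM k M M'} then 1 else 0)"
  unfolding E_def by (rule ext) (rule sum_F[OF fin_E])

lemma H_eq: "H k M = (\<lambda>X. if X \<in> {M'. leM k M' M \<and> packed k M'} then 1 else 0)"
  unfolding H_def by (rule ext) (rule sum_F[OF fin_H])

lemma pm_mult_ind:
  fixes S1 S2 :: "pmat set"
  assumes f1: "finite S1" "finite S2" and one: "(1::'a::comm_ring_1) \<noteq> 0"
    and uniq: "\<And>A B A' B'. A\<in>S1 \<Longrightarrow> B\<in>S2 \<Longrightarrow> A'\<in>S1 \<Longrightarrow> B'\<in>S2 \<Longrightarrow> X \<in> Sh_c A B \<Longrightarrow> X \<in> Sh_c A' B' \<Longrightarrow> A = A' \<and> B = B'"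
  shows "pm_mult (\<lambda>A. if A \<in> S1 then 1 else 0) (\<lambda>B. if B \<in> S2 then 1 else 0) X
     = (if \<exists>A\<in>S1. \<exists>B\<in>S2. X \<in> Sh_c A B then (1::'a) else 0)"
proof -
  have supp: "{(A,B). (if A \<in> S1 then 1 else 0::'a) \<noteq> 0 \<and> (if B \<in> S2 then 1 else 0::'a) \<noteq> 0} = S1 \<times> S2"
    using one by auto
  have fS: "finite (S1 \<times> S2)" using f1 by simp
  have "pm_mult (\<lambda>A. if A \<in> S1 then 1 else 0) (\<lambda>B. if B \<in> S2 then 1 else 0) X
      = (\<Sum>p\<in>S1\<times>S2. (if X \<in> Sh_c (fst p) (snd p) then 1 else (0::'a)))"
    unfolding pm_mult_def supp
    by (intro sum.cong refl) (auto simp: sum_F Sh_c_def)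
  also have "\<dots> = (\<Sum>p\<in>{p\<in>S1\<times>S2. X \<in> Sh_c (fst p) (snd p)}. 1)"
    by (rule sum.inter_filter[OF fS, of "\<lambda>_. 1" "\<lambda>p. X \<in> Sh_c (fst p) (snd p)", symmetric])
  also have "\<dots> = (if \<exists>A\<in>S1. \<exists>B\<in>S2. X \<in> Sh_c A B then (1::'a) else 0)"
  proof (cases "\<exists>A\<in>S1. \<exists>B\<in>S2. X \<in> Sh_c A B")
    case True
    then obtain A B where AB: "A\<in>S1" "B\<in>S2" "X \<in> Sh_c A B" by blast
    have "{p\<in>S1\<times>S2. X \<in> Sh_c (fst p) (snd p)} = {(A,B)}"
      using AB uniq by fastforce
    then show ?thesis using True by simp
  next
    case False
    then have e: "{p\<in>S1\<times>S2. X \<in> Sh_c (fst p) (snd p)} = {}" by auto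
    show ?thesis unfolding e using False by simp
  qed
  finally show ?thesis .
qed

lemma inj_pa: "inj (pad_below n)" unfolding inj_def pad_below_def by simp
lemma inj_pb: "inj (pad_above n)" unfolding inj_def pad_above_def by simp

lemma Sh_uniq:
  assumes "packed k A" "packed k A'" "packed k B" "packed k B'" "length A' = length A" "length B' = length B"
    "X \<in> Sh_c A B" "X \<in> Sh_c A' B'"
  shows "A = A' \<and> B = B'"
proof -
  have 1: "map (pad_below (length B)) A = map (pad_below (length B)) A'"
    using Sh_iff[OF assms(1,3)] Sh_iff[OF assms(2,4)] assms by simp
  have 2: "map (pad_above (length A)) B = map (pad_above (length A)) B'"
    using Sh_iff[OF assms(1,3)] Sh_iff[OF assms(2,4)] assms by simp
  show ?thesis using 1 2 inj_map_eq_map[OF inj_pa] inj_map_eq_map[OF inj_pb] by blast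
qed

lemma triv_ring: "(1::'a::comm_ring_1) = 0 \<Longrightarrow> (f :: 'b \<Rightarrow> 'a) = g"
proof
  fix x assume "(1::'a) = 0"
  then have "\<And>y::'a. y = 0" by (metis mult.right_neutral mult_zero_right)
  then show "f x = g x" by metis
qed

theorem proposition2p3:
  fixes k :: nat and M1 M2 :: pmat
  assumes "k \<ge> 1" and "packed k M1" and "packed k M2"
  shows "pm_mult (E k M1) (E k M2) = (E k (ov M1 M2) :: pmat \<Rightarrow> 'a::comm_ring_1)
       \<and> pm_mult (H k M1) (H k M2) = (H k (un M1 M2) :: pmat \<Rightarrow> 'a)"
proof (cases "(1::'a) = 0")
  case True
  then show ?thesis using triv_ring[OF True] by blast
next
  case one: False
  note p1 = assms(2) and p2 = assms(3)
  have E: "pm_mult (E k M1) (E k M2) = (E k (ov M1 M2) :: pmat \<Rightarrow> 'a)"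
  proof
    fix X
    have "pm_mult (E k M1) (E k M2) X = (if \<exists>A\<in>{M'. leM k M1 M'}. \<exists>B\<in>{M'. leM k M2 M'}. X \<in> Sh_c A B then (1::'a) else 0)"
      unfolding E_eq
    proof (rule pm_mult_ind[OF fin_E fin_E one])
      fix A B A' B' assume "A \<in> {M'. leM k M1 M'}" "B \<in> {M'. leM k M2 M'}" "A' \<in> {M'. leM k M1 M'}"
        "B' \<in> {M'. leM k M2 M'}" "X \<in> Sh_c A B" "X \<in> Sh_c A' B'"
      then have l: "leM k M1 A" "leM k M2 B" "leM k M1 A'" "leM k M2 B'" by auto
      have "packed k A" "packed k A'" "packed k B" "packed k B'"
        using leM_packed[OF l(1) p1] leM_packed[OF l(3) p1] leM_packed[OF l(2) p2] leM_packed[OF l(4) p2] .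
      moreover have "length A' = length A" "length B' = length B"
        using leM_length[OF l(1)] leM_length[OF l(2)] leM_length[OF l(3)] leM_length[OF l(4)] by simp_all
      ultimately show "A = A' \<and> B = B'"
        using Sh_uniq[of k A A' B B' X] \<open>X \<in> Sh_c A B\<close> \<open>X \<in> Sh_c A' B'\<close> by blast
    qed
    also have "\<dots> = E k (ov M1 M2) X" unfolding E_eq using E_char[OF p1 p2, of X] by auto
    finally show "pm_mult (E k M1) (E k M2) X = (E k (ov M1 M2) X :: 'a)" .
  qed
  have H: "pm_mult (H k M1) (H k M2) = (H k (un M1 M2) :: pmat \<Rightarrow> 'a)"
  proof
    fix X
    have "pm_mult (H k M1) (H k M2) X = (if \<exists>A\<in>{M'. leM k M' M1 \<and> packed k M'}. \<exists>B\<in>{M'. leM k M' M2 \<and> packed k M'}. X \<in> Sh_c A B then (1::'a) else 0)"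
      unfolding H_eq
    proof (rule pm_mult_ind[OF fin_H fin_H one])
      fix A B A' B' assume a: "A \<in> {M'. leM k M' M1 \<and> packed k M'}" "B \<in> {M'. leM k M' M2 \<and> packed k M'}"
        "A' \<in> {M'. leM k M' M1 \<and> packed k M'}"
        "B' \<in> {M'. leM k M' M2 \<and> packed k M'}" "X \<in> Sh_c A B" "X \<in> Sh_c A' B'"
      then have l: "leM k A M1" "leM k B M2" "leM k A' M1" "leM k B' M2" by auto
      have "length A' = length A" "length B' = length B"
        using leM_length[OF l(1)] leM_length[OF l(2)] leM_length[OF l(3)] leM_length[OF l(4)] by simp_all
      then show "A = A' \<and> B = B'"
        using Sh_uniq[of k A A' B B' X] a by auto
    qed
    also have "\<dots> = H k (un M1 M2) X" unfolding H_eq using H_char[OF p1 p2, of X] by auto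
    finally show "pm_mult (H k M1) (H k M2) X = (H k (un M1 M2) X :: 'a)" .
  qed
  show ?thesis using E H by blast
qed

end
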